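(* Let $X$ be a proper, path connected metric space and let $S=\{x_i\}_{i\in I}$ be a discrete subset of $X$. Fix a positive integer $n\le \#(S)$. Then $$\bigcup_{i\in I} B_n(x_i)=X \qquad\text{and}\qquad b_n(x_i)\cap b_n(x_j)=\emptyset \ \text{ whenever } i\neq j.$$
   Context: $(X,d)$ is a metric space. It is proper if for every $x\in X$ the function $d(x,\cdot)$ is a proper map (in particular every closed ball is compact). A subset $S\subseteq X$ is discrete if every compact subset of $X$ contains only finitely many points of $S$. For $x\in X$ and $r>0$ write $N_r(x)=\{y\in X: d(x,y)<r\}$ and $C_r(x)=\{y\in X: d(x,y)=r\}$; $\#(\cdot)$ denotes cardinality. For $x_0\in S$, a positive integer $n\le\#(S)$, and $x\in X$ with $r=d(x,x_0)$, define: $x\in b_n(x_0)$ iff $\#(N_r(x)\cap S)=n-1$ and $C_r(x)\cap S=\{x_0\}$; and $x\in B_n(x_0)$ iff $\#(N_r(x)\cap S)=m$ and $\#(C_r(x)\cap S)=\ell$ for some integers $m\ge 0$, $\ell\ge 1$ with $m+1\le n\le m+\ell$. ($B_n(x_0)$ is called the $n$-th Brillouin zone with base point $x_0$.) *)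

theory Defs
  imports "HOL-Analysis.Analysis"
begin

text \<open>The metric space X is the whole (nonempty) type 'a of class metric_space.
  N_r(x) = ball x r, C_r(x) = sphere x r.\<close>

definition proper_metric_space :: "'a::metric_space itself \<Rightarrow> bool" where
  "proper_metric_space _ \<longleftrightarrow>
     (\<forall>(x::'a) (K::real set). compact K \<longrightarrow> compact {y. dist x y \<in> K})"

definition discrete_subset :: "'a::metric_space set \<Rightarrow> bool" where
  "discrete_subset S \<longleftrightarrow> (\<forall>K. compact K \<longrightarrow> finite (K \<inter> S))"

definition small_zone :: "'a::metric_space set \<Rightarrow> nat \<Rightarrow> 'a \<Rightarrow> 'a set" where
  "small_zone S n x0 = {x. let r = dist x x0 in
      finite (ball x r \<inter> S) \<and> card (ball x r \<inter> S) = n - 1 \<and> sphere x r \<inter> S = {x0}}"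

definition brillouin_zone :: "'a::metric_space set \<Rightarrow> nat \<Rightarrow> 'a \<Rightarrow> 'a set" where
  "brillouin_zone S n x0 = {x. let r = dist x x0 in
      \<exists>m l::nat. finite (ball x r \<inter> S) \<and> card (ball x r \<inter> S) = m \<and>
        finite (sphere x r \<inter> S) \<and> card (sphere x r \<inter> S) = l \<and>
        l \<ge> 1 \<and> m + 1 \<le> n \<and> n \<le> m + l}"

end

theory Submission
  imports Defs
begin

lemma fin_cball:
  fixes S :: "'a::metric_space set"
  assumes "proper_metric_space TYPE('a)" "discrete_subset S"
  shows "finite (cball x R \<inter> S)"
proof -
  have "compact {y. dist x y \<in> {0..R}}"
    using assms(1) unfolding proper_metric_space_def by blast
  moreover have "{y. dist x y \<in> {0..R}} = cball x R" by (auto simp: cball_def)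
  ultimately show ?thesis using assms(2) unfolding discrete_subset_def by metis
qed

lemma fin_ball:
  fixes S :: "'a::metric_space set"
  assumes "proper_metric_space TYPE('a)" "discrete_subset S"
  shows "finite (ball x R \<inter> S)" "finite (sphere x R \<inter> S)"
proof -
  have f: "finite (cball x R \<inter> S)" using fin_cball[OF assms] .
  show "finite (ball x R \<inter> S)" by (rule finite_subset[OF _ f]) auto
  show "finite (sphere x R \<inter> S)" by (rule finite_subset[OF _ f]) auto
qed

theorem mainTheorem1:
  fixes S :: "'a::metric_space set" and n :: nat
  assumes "proper_metric_space TYPE('a)"
    and "path_connected (UNIV :: 'a set)"
    and "discrete_subset S"
    and "n \<ge> 1" and "infinite S \<or> n \<le> card S"
  shows "(\<Union>x0\<in>S. brillouin_zone S n x0) = UNIV \<and>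
         (\<forall>x0\<in>S. \<forall>x1\<in>S. x0 \<noteq> x1 \<longrightarrow> small_zone S n x0 \<inter> small_zone S n x1 = {})"
proof
  note fc = fin_cball[OF assms(1,3)]
  note fb = fin_ball[OF assms(1,3)]
  show "(\<Union>x0\<in>S. brillouin_zone S n x0) = UNIV"
  proof (rule set_eqI, rule iffI)
    fix x assume "x \<in> (UNIV::'a set)"
    obtain T where T: "T \<subseteq> S" "card T = n"
      using assms(5) by (meson infinite_arbitrarily_large obtain_subset_with_card_n)
    have Tf: "finite T" "T \<noteq> {}" using T assms(4) card.infinite by fastforce+
    define R where "R = Max (dist x ` T)"
    have TR: "T \<subseteq> cball x R \<inter> S" using T Tf by (auto simp: R_def)
    define D where "D = {d \<in> dist x ` (cball x R \<inter> S). n \<le> card (cball x d \<inter> S)}"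
    have Df: "finite D" using fc[where R=R] by (auto simp: D_def)
    have "R \<in> D"
    proof -
      have "R \<in> dist x ` T" using Tf by (simp add: R_def)
      hence "R \<in> dist x ` (cball x R \<inter> S)" using TR by blast
      moreover have "n \<le> card (cball x R \<inter> S)"
        using card_mono[OF fc TR] T by simp
      ultimately show ?thesis by (simp add: D_def)
    qed
    hence Dne: "D \<noteq> {}" by blast
    define r where "r = Min D"
    have rD: "r \<in> D" using Df Dne by (simp add: r_def)
    have rmin: "\<And>d. d \<in> D \<Longrightarrow> r \<le> d" using Df by (simp add: r_def)
    obtain y where y: "y \<in> cball x R \<inter> S" "r = dist x y" and cr: "n \<le> card (cball x r \<inter> S)"
      using rD by (auto simp: D_def)
    have rR: "r \<le> R" using y by auto
    have bl: "card (ball x r \<inter> S) < n"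
    proof (rule ccontr)
      assume "\<not> ?thesis"
      hence cb: "n \<le> card (ball x r \<inter> S)" by simp
      hence ne: "ball x r \<inter> S \<noteq> {}" using assms(4) by auto
      define d where "d = Max (dist x ` (ball x r \<inter> S))"
      have dm: "d \<in> dist x ` (ball x r \<inter> S)" using fb(1) ne by (simp add: d_def)
      hence dr: "d < r" by auto
      have sub: "ball x r \<inter> S \<subseteq> cball x d \<inter> S" using fb(1)[where x=x and R=r] by (auto simp: d_def)
      have "d \<in> D"
        unfolding D_def using dm dr rR card_mono[OF fc sub] cb by auto
      thus False using rmin dr by force
    qed
    have split: "cball x r \<inter> S = (ball x r \<inter> S) \<union> (sphere x r \<inter> S)"
      "(ball x r \<inter> S) \<inter> (sphere x r \<inter> S) = {}" by auto
    have cs: "card (cball x r \<inter> S) = card (ball x r \<inter> S) + card (sphere x r \<inter> S)"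
      using split card_Un_disjoint[OF fb(1) fb(2)] by metis
    have "y \<in> sphere x r \<inter> S" using y by auto
    hence l1: "1 \<le> card (sphere x r \<inter> S)"
      using fb(2) by (metis One_nat_def Suc_leI card_gt_0_iff empty_iff)
    have "x \<in> brillouin_zone S n y"
      unfolding brillouin_zone_def Let_def using y(2)[symmetric] bl cr cs fb l1
      by auto
    thus "x \<in> (\<Union>x0\<in>S. brillouin_zone S n x0)" using y by blast
  qed simp
  show "\<forall>x0\<in>S. \<forall>x1\<in>S. x0 \<noteq> x1 \<longrightarrow> small_zone S n x0 \<inter> small_zone S n x1 = {}"
  proof (intro ballI impI)
    fix x0 x1 assume x: "x0 \<in> S" "x1 \<in> S" "x0 \<noteq> x1"
    have key: False if a: "x \<in> small_zone S n a" "x \<in> small_zone S n b" "a \<noteq> b"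
      "dist x a < dist x b" for x a b
    proof -
      have "a \<in> S" "card (ball x (dist x a) \<inter> S) = n - 1"
        "card (ball x (dist x b) \<inter> S) = n - 1"
        using a(1,2) by (auto simp: small_zone_def Let_def dist_commute)
      moreover have "insert a (ball x (dist x a) \<inter> S) \<subseteq> ball x (dist x b) \<inter> S"
        using a \<open>a \<in> S\<close> by auto
      moreover have "a \<notin> ball x (dist x a)" by simp
      ultimately have "Suc (n - 1) \<le> n - 1"
        using card_mono[OF fb(1)] fb(1)[where x=x and R="dist x a"] by (metis card_insert_disjoint IntD1)
      thus False by simp
    qed
    show "small_zone S n x0 \<inter> small_zone S n x1 = {}"
    proof (rule ccontr)
      assume "\<not> ?thesis"
      then obtain x where xx: "x \<in> small_zone S n x0" "x \<in> small_zone S n x1" by blast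
      consider "dist x x0 < dist x x1" | "dist x x1 < dist x x0" | "dist x x0 = dist x x1" by linarith
      thus False
      proof cases
        case 3
        have "sphere x (dist x x0) \<inter> S = {x0}" "sphere x (dist x x1) \<inter> S = {x1}"
          using xx by (auto simp: small_zone_def Let_def dist_commute)
        thus False using 3 x by auto
      qed (use key xx x in metis)+
    qed
  qed
qed

end
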